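(* Let $L_1\geq 1$, $L_2\geq 2$, and let $A\in\mathbb{R}^{J\times N}$ have one-hot columns. Suppose $\sigma$ is Lipschitz continuous with constant $B>0$. Then for all parameters $\{K_l,b_l,c_l\}_{l=1}^{L_1}$ and $\{\hat W_{L_2},\hat W_l,\hat b_l,\hat c_l\}_{l=1}^{L_2-1}$ (of compatible sizes), $$\mathcal{L}(\phi_{\mathrm{CNN}}(\hat X;\theta),A)\leq C_B\cdot\sqrt{L_1+L_2-1}\cdot\mathcal{L}^{\mathrm{CNN}}_{\mathrm S},$$ where $C_B=\max\{\sqrt2,\,2B,\,2B^{L_1+L_2-1}\}$.
   Context: Cross-entropy: for $\boldsymbol z\in\mathbb{R}^J$ and one-hot $\boldsymbol\alpha$ (entries in $\{0,1\}$ summing to 1), $\ell(\boldsymbol z,\boldsymbol\alpha)=-\sum_j\alpha_j\ln\big(e^{z_j}/\sum_ke^{z_k}\big)$; for $Z=[\boldsymbol z_1\cdots\boldsymbol z_N]$, $\mathcal{L}_{\mathrm{vec}}(Z,A)=[\ell(\boldsymbol z_n,\boldsymbol\alpha_n)]_{n=1}^N$ and $\mathcal{L}(Z,A)=\frac1N\sum_n\ell(\boldsymbol z_n,\boldsymbol\alpha_n)$. Input data $\hat X\in\mathbb{R}^{d\times N}$ (columns are vectorized input images). The CNN (single channel) is $\phi_{\mathrm{CNN}}(\boldsymbol x;\theta)=\hat W_{L_2}\sigma(\hat W_{L_2-1}\sigma(\cdots\sigma(\hat W_1P_{L_1}\sigma(K_{L_1}P_{L_1-1}\sigma(\cdots P_1\sigma(K_1\boldsymbol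 x+b_1)\cdots)+b_{L_1})+\hat b_1)\cdots)+\hat b_{L_2-1})$, where $K_l$ are matrices (representing convolutions), $P_l$ are fixed matrices (representing pooling), $b_l,\hat b_l$ are bias vectors, $\hat W_l$ are weight matrices, all of compatible sizes, $\sigma$ acts entrywise, and $\phi_{\mathrm{CNN}}(\hat X;\theta)$ applies it columnwise. With $\mathbf 1\in\mathbb{R}^N$ all-ones, weights: $\omega_{L_1}=\big(\prod_{k=2}^{L_2}\|\hat W_k\|_{\mathrm F}^2\big)\|\hat W_1P_{L_1}\|_{\mathrm F}^2$, $\omega_l=\omega_{L_1}\prod_{j=l+1}^{L_1}\|K_jP_{j-1}\|_{\mathrm F}^2$ for $l=1,\dots,L_1-1$, $\hat\omega_l=\prod_{k=l+1}^{L_2}\|\hat W_k\|_{\mathrm F}^2$ for $l=1,\dots,L_2-1$. Define $T=\|\mathcal{L}_{\mathrm{vec}}(\hat W_{L_2}\sigma(\hat c_{L_2-1}),A)\|_2^2+\sum_{l=2}^{L_1}\omega_l\|K_lP_{l-1}\sigma(c_{l-1})+b_l\mathbf 1^\top-c_l\|_{\mathrm F}^2+\omega_1\|K_1\hat X+b_1\mathbf 1^\top-c_1\|_{\mathrm F}^2+\sum_{l=2}^{L_2-1}\hat\omega_l\|\hat W_l\sigma(\hat c_{l-1})+\hat b_l\mathbf 1^\top-\hat c_l\|_{\mathrm F}^2+\hat\omega_1\|\hat W_1P_{L_1}\sigma(c_{L_1})+\hat b_1\mathbf 1^\top-\hat c_1\|_{\mathrm F}^2$, and $\mathcal{L}^{\mathrm{CNN}}_{\mathrm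 S}=\frac1{\sqrt N}T^{1/2}$. *)

theory Defs
  imports Complex_Main "Jordan_Normal_Form.Matrix"
begin

definition lipschitz_with :: "real \<Rightarrow> (real \<Rightarrow> real) \<Rightarrow> bool" where
  "lipschitz_with B f \<longleftrightarrow> (\<forall>x y. \<bar>f x - f y\<bar> \<le> B * \<bar>x - y\<bar>)"

definition frob_norm :: "real mat \<Rightarrow> real" where
  "frob_norm M = sqrt (\<Sum>i<dim_row M. \<Sum>j<dim_col M. (M $$ (i, j))\<^sup>2)"

definition vnorm2 :: "real vec \<Rightarrow> real" where
  "vnorm2 v = sqrt (\<Sum>i<dim_vec v. (v $ i)\<^sup>2)"

definition bcast :: "real vec \<Rightarrow> nat \<Rightarrow> real mat" where
  "bcast b N = mat (dim_vec b) N (\<lambda>(i, j). b $ i)"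

definition one_hot_cols :: "real mat \<Rightarrow> bool" where
  "one_hot_cols A \<longleftrightarrow> (\<forall>n<dim_col A. (\<forall>j<dim_row A. A $$ (j, n) \<in> {0, 1})
      \<and> (\<Sum>j<dim_row A. A $$ (j, n)) = 1)"

definition ce :: "real vec \<Rightarrow> real vec \<Rightarrow> real" where
  "ce z \<alpha> = - (\<Sum>j<dim_vec z. \<alpha> $ j * ln (exp (z $ j) / (\<Sum>k<dim_vec z. exp (z $ k))))"

definition L_vec :: "real mat \<Rightarrow> real mat \<Rightarrow> real vec" where
  "L_vec Z A = vec (dim_col Z) (\<lambda>n. ce (col Z n) (col A n))"

definition L_loss :: "real mat \<Rightarrow> real mat \<Rightarrow> real" where
  "L_loss Z A = (1 / real (dim_col Z)) * (\<Sum>n<dim_col Z. ce (col Z n) (col A n))"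

fun conv_pre :: "(real \<Rightarrow> real) \<Rightarrow> (nat \<Rightarrow> real mat) \<Rightarrow> (nat \<Rightarrow> real vec) \<Rightarrow> (nat \<Rightarrow> real mat)
    \<Rightarrow> real vec \<Rightarrow> nat \<Rightarrow> real vec" where
  "conv_pre \<sigma> K b P x 0 = x"
| "conv_pre \<sigma> K b P x (Suc 0) = K 1 *\<^sub>v x + b 1"
| "conv_pre \<sigma> K b P x (Suc (Suc l)) =
     (K (Suc (Suc l)) * P (Suc l)) *\<^sub>v map_vec \<sigma> (conv_pre \<sigma> K b P x (Suc l)) + b (Suc (Suc l))"

fun fc_pre :: "(real \<Rightarrow> real) \<Rightarrow> nat \<Rightarrow> (nat \<Rightarrow> real mat) \<Rightarrow> (nat \<Rightarrow> real vec) \<Rightarrow> (nat \<Rightarrow> real mat)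
    \<Rightarrow> (nat \<Rightarrow> real mat) \<Rightarrow> (nat \<Rightarrow> real vec) \<Rightarrow> real vec \<Rightarrow> nat \<Rightarrow> real vec" where
  "fc_pre \<sigma> L1 K b P W bh x 0 = conv_pre \<sigma> K b P x L1"
| "fc_pre \<sigma> L1 K b P W bh x (Suc 0) =
     (W 1 * P L1) *\<^sub>v map_vec \<sigma> (conv_pre \<sigma> K b P x L1) + bh 1"
| "fc_pre \<sigma> L1 K b P W bh x (Suc (Suc l)) =
     W (Suc (Suc l)) *\<^sub>v map_vec \<sigma> (fc_pre \<sigma> L1 K b P W bh x (Suc l)) + bh (Suc (Suc l))"

definition phi_CNN :: "(real \<Rightarrow> real) \<Rightarrow> nat \<Rightarrow> nat \<Rightarrow> (nat \<Rightarrow> real mat) \<Rightarrow> (nat \<Rightarrow> real vec)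
    \<Rightarrow> (nat \<Rightarrow> real mat) \<Rightarrow> (nat \<Rightarrow> real mat) \<Rightarrow> (nat \<Rightarrow> real vec) \<Rightarrow> real vec \<Rightarrow> real vec" where
  "phi_CNN \<sigma> L1 L2 K b P W bh x = W L2 *\<^sub>v map_vec \<sigma> (fc_pre \<sigma> L1 K b P W bh x (L2 - 1))"

definition phi_CNN_mat :: "(real \<Rightarrow> real) \<Rightarrow> nat \<Rightarrow> nat \<Rightarrow> (nat \<Rightarrow> real mat) \<Rightarrow> (nat \<Rightarrow> real vec)
    \<Rightarrow> (nat \<Rightarrow> real mat) \<Rightarrow> (nat \<Rightarrow> real mat) \<Rightarrow> (nat \<Rightarrow> real vec) \<Rightarrow> real mat \<Rightarrow> real mat" where
  "phi_CNN_mat \<sigma> L1 L2 K b P W bh X =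
     mat_of_cols (dim_row (W L2)) (map (\<lambda>n. phi_CNN \<sigma> L1 L2 K b P W bh (col X n)) [0..<dim_col X])"

definition omega :: "nat \<Rightarrow> nat \<Rightarrow> (nat \<Rightarrow> real mat) \<Rightarrow> (nat \<Rightarrow> real mat) \<Rightarrow> (nat \<Rightarrow> real mat) \<Rightarrow> nat \<Rightarrow> real" where
  "omega L1 L2 K P W l =
     (\<Prod>k\<in>{2..L2}. (frob_norm (W k))\<^sup>2) * (frob_norm (W 1 * P L1))\<^sup>2
     * (\<Prod>j\<in>{l+1..L1}. (frob_norm (K j * P (j - 1)))\<^sup>2)"

definition omega_hat :: "nat \<Rightarrow> (nat \<Rightarrow> real mat) \<Rightarrow> nat \<Rightarrow> real" where
  "omega_hat L2 W l = (\<Prod>k\<in>{l+1..L2}. (frob_norm (W k))\<^sup>2)"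

definition T_CNN :: "(real \<Rightarrow> real) \<Rightarrow> nat \<Rightarrow> nat \<Rightarrow> real mat \<Rightarrow> real mat
    \<Rightarrow> (nat \<Rightarrow> real mat) \<Rightarrow> (nat \<Rightarrow> real vec) \<Rightarrow> (nat \<Rightarrow> real mat) \<Rightarrow> (nat \<Rightarrow> real mat)
    \<Rightarrow> (nat \<Rightarrow> real mat) \<Rightarrow> (nat \<Rightarrow> real vec) \<Rightarrow> (nat \<Rightarrow> real mat) \<Rightarrow> real" where
  "T_CNN \<sigma> L1 L2 X A K b c P W bh ch =
     (let N = dim_col X in
       (vnorm2 (L_vec (W L2 * map_mat \<sigma> (ch (L2 - 1))) A))\<^sup>2
     + (\<Sum>l\<in>{2..L1}. omega L1 L2 K P W l *
          (frob_norm (K l * P (l - 1) * map_mat \<sigma> (c (l - 1)) + bcast (b l) N - c l))\<^sup>2)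
     + omega L1 L2 K P W 1 * (frob_norm (K 1 * X + bcast (b 1) N - c 1))\<^sup>2
     + (\<Sum>l\<in>{2..L2-1}. omega_hat L2 W l *
          (frob_norm (W l * map_mat \<sigma> (ch (l - 1)) + bcast (bh l) N - ch l))\<^sup>2)
     + omega_hat L2 W 1 * (frob_norm (W 1 * P L1 * map_mat \<sigma> (c L1) + bcast (bh 1) N - ch 1))\<^sup>2)"

definition L_S_CNN :: "(real \<Rightarrow> real) \<Rightarrow> nat \<Rightarrow> nat \<Rightarrow> real mat \<Rightarrow> real mat
    \<Rightarrow> (nat \<Rightarrow> real mat) \<Rightarrow> (nat \<Rightarrow> real vec) \<Rightarrow> (nat \<Rightarrow> real mat) \<Rightarrow> (nat \<Rightarrow> real mat)
    \<Rightarrow> (nat \<Rightarrow> real mat) \<Rightarrow> (nat \<Rightarrow> real vec) \<Rightarrow> (nat \<Rightarrow> real mat) \<Rightarrow> real" where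
  "L_S_CNN \<sigma> L1 L2 X A K b c P W bh ch =
     1 / sqrt (real (dim_col X)) * sqrt (T_CNN \<sigma> L1 L2 X A K b c P W bh ch)"

end

theory Submission
  imports Defs "HOL-Analysis.L2_Norm"
begin


lemma vnorm2_L2: "vnorm2 v = L2_set (\<lambda>i. v $ i) {..<dim_vec v}"
  unfolding vnorm2_def L2_set_def by simp

lemma vnorm2_nonneg: "vnorm2 v \<ge> 0"
  unfolding vnorm2_def by (simp add: sum_nonneg)

lemma frob_nonneg: "frob_norm M \<ge> 0"
  unfolding frob_norm_def by (simp add: sum_nonneg)

lemma vnorm2_add_le:
  assumes "dim_vec u = dim_vec v"
  shows "vnorm2 (u + v) \<le> vnorm2 u + vnorm2 v"
proof -
  have "vnorm2 (u + v) = L2_set (\<lambda>i. u $ i + v $ i) {..<dim_vec v}"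
    unfolding vnorm2_L2 by (intro L2_set_cong) (auto simp: assms)
  also have "\<dots> \<le> L2_set (\<lambda>i. u $ i) {..<dim_vec v} + L2_set (\<lambda>i. v $ i) {..<dim_vec v}"
    by (rule L2_set_triangle_ineq)
  finally show ?thesis unfolding vnorm2_L2 using assms by simp
qed

lemma vnorm2_mult_le:
  assumes "dim_col M = dim_vec v"
  shows "vnorm2 (M *\<^sub>v v) \<le> frob_norm M * vnorm2 v"
proof -
  have row: "((M *\<^sub>v v) $ i)\<^sup>2 \<le> (\<Sum>j<dim_col M. (M $$ (i, j))\<^sup>2) * (\<Sum>j<dim_vec v. (v $ j)\<^sup>2)"
    if i: "i < dim_row M" for i
  proof -
    have e: "(M *\<^sub>v v) $ i = (\<Sum>j<dim_vec v. M $$ (i, j) * v $ j)"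
      using i assms by (simp add: scalar_prod_def lessThan_atLeast0)
    have "\<bar>\<Sum>j<dim_vec v. M $$ (i, j) * v $ j\<bar> \<le> (\<Sum>j<dim_vec v. \<bar>M $$ (i, j)\<bar> * \<bar>v $ j\<bar>)"
      by (rule order_trans[OF sum_abs]) (simp add: abs_mult)
    also have "\<dots> \<le> L2_set (\<lambda>j. M $$ (i, j)) {..<dim_vec v} * L2_set (\<lambda>j. v $ j) {..<dim_vec v}"
      by (rule L2_set_mult_ineq)
    finally have h: "\<bar>(M *\<^sub>v v) $ i\<bar> \<le> L2_set (\<lambda>j. M $$ (i, j)) {..<dim_vec v} * L2_set (\<lambda>j. v $ j) {..<dim_vec v}"
      using e by simp
    have "((M *\<^sub>v v) $ i)\<^sup>2 = \<bar>(M *\<^sub>v v) $ i\<bar>\<^sup>2" by simp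
    also have "\<dots> \<le> (L2_set (\<lambda>j. M $$ (i, j)) {..<dim_vec v} * L2_set (\<lambda>j. v $ j) {..<dim_vec v})\<^sup>2"
      by (rule power_mono[OF h]) simp
    also have "\<dots> = (\<Sum>j<dim_col M. (M $$ (i, j))\<^sup>2) * (\<Sum>j<dim_vec v. (v $ j)\<^sup>2)"
      unfolding power_mult_distrib L2_set_def using assms by (simp add: sum_nonneg)
    finally show ?thesis .
  qed
  have "(\<Sum>i<dim_vec (M *\<^sub>v v). ((M *\<^sub>v v) $ i)\<^sup>2) \<le>
        (\<Sum>i<dim_row M. (\<Sum>j<dim_col M. (M $$ (i, j))\<^sup>2) * (\<Sum>j<dim_vec v. (v $ j)\<^sup>2))"
    using row by (auto intro: sum_mono)
  also have "\<dots> = (\<Sum>i<dim_row M. \<Sum>j<dim_col M. (M $$ (i, j))\<^sup>2) * (\<Sum>j<dim_vec v. (v $ j)\<^sup>2)"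
    by (simp add: sum_distrib_right)
  finally have "sqrt (\<Sum>i<dim_vec (M *\<^sub>v v). ((M *\<^sub>v v) $ i)\<^sup>2) \<le>
     sqrt ((\<Sum>i<dim_row M. \<Sum>j<dim_col M. (M $$ (i, j))\<^sup>2) * (\<Sum>j<dim_vec v. (v $ j)\<^sup>2))"
    by (rule real_sqrt_le_mono)
  thus ?thesis unfolding vnorm2_def frob_norm_def by (simp add: real_sqrt_mult)
qed

lemma vnorm2_sigma:
  assumes "lipschitz_with B \<sigma>" "B \<ge> 0" "dim_vec u = dim_vec v"
  shows "vnorm2 (map_vec \<sigma> u - map_vec \<sigma> v) \<le> B * vnorm2 (u - v)"
proof -
  have c: "((map_vec \<sigma> u - map_vec \<sigma> v) $ i)\<^sup>2 \<le> B\<^sup>2 * ((u - v) $ i)\<^sup>2" if "i < dim_vec v" for i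
  proof -
    have "\<bar>\<sigma> (u $ i) - \<sigma> (v $ i)\<bar> \<le> B * \<bar>u $ i - v $ i\<bar>"
      using assms(1) unfolding lipschitz_with_def by blast
    hence "\<bar>\<sigma> (u $ i) - \<sigma> (v $ i)\<bar>\<^sup>2 \<le> (B * \<bar>u $ i - v $ i\<bar>)\<^sup>2"
      by (rule power_mono) simp
    thus ?thesis using that assms(3) by (simp add: power_mult_distrib)
  qed
  have "(\<Sum>i<dim_vec (map_vec \<sigma> u - map_vec \<sigma> v). ((map_vec \<sigma> u - map_vec \<sigma> v) $ i)\<^sup>2)
      \<le> (\<Sum>i<dim_vec v. B\<^sup>2 * ((u - v) $ i)\<^sup>2)"
    using c by (auto intro: sum_mono)
  also have "\<dots> = B\<^sup>2 * (\<Sum>i<dim_vec (u - v). ((u - v) $ i)\<^sup>2)"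
    by (simp add: sum_distrib_left)
  finally have "vnorm2 (map_vec \<sigma> u - map_vec \<sigma> v) \<le> sqrt (B\<^sup>2 * (\<Sum>i<dim_vec (u - v). ((u - v) $ i)\<^sup>2))"
    unfolding vnorm2_def by (rule real_sqrt_le_mono)
  thus ?thesis using assms(2) unfolding vnorm2_def by (simp add: real_sqrt_mult)
qed

lemma frob_cols: "(frob_norm R)\<^sup>2 = (\<Sum>q<dim_col R. (vnorm2 (col R q))\<^sup>2)"
  unfolding frob_norm_def vnorm2_def
  by (simp add: sum_nonneg) (rule sum.swap)

lemma sum_le_sqrt_L2:
  fixes f :: "nat \<Rightarrow> real"
  shows "(\<Sum>q<N. f q) \<le> sqrt (real N) * sqrt (\<Sum>q<N. (f q)\<^sup>2)"
proof -
  have "(\<Sum>q<N. f q) \<le> (\<Sum>q<N. \<bar>1::real\<bar> * \<bar>f q\<bar>)" by (auto intro: sum_mono)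
  also have "\<dots> \<le> L2_set (\<lambda>_. 1::real) {..<N} * L2_set f {..<N}" by (rule L2_set_mult_ineq)
  finally show ?thesis unfolding L2_set_def by simp
qed

lemma sum_cols_le: "(\<Sum>q<dim_col R. vnorm2 (col R q)) \<le> sqrt (real (dim_col R)) * frob_norm R"
proof -
  have "frob_norm R = sqrt ((frob_norm R)\<^sup>2)" using frob_nonneg by simp
  thus ?thesis using sum_le_sqrt_L2[of "\<lambda>q. vnorm2 (col R q)" "dim_col R"] frob_cols[of R] by simp
qed



lemma ce_alt:
  assumes "dim_vec z = J" "(\<Sum>j<J. \<alpha> $ j) = 1"
  shows "ce z \<alpha> = ln (\<Sum>k<J. exp (z $ k)) - (\<Sum>j<J. \<alpha> $ j * z $ j)"
proof -
  have J: "J > 0" using assms(2) by (cases J) auto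
  have S: "(\<Sum>k<J. exp (z $ k)) > 0" using J by (intro sum_pos) auto
  have "ce z \<alpha> = - (\<Sum>j<J. \<alpha> $ j * (z $ j - ln (\<Sum>k<J. exp (z $ k))))"
    unfolding ce_def assms(1) using S by (simp add: ln_div)
  also have "\<dots> = ln (\<Sum>k<J. exp (z $ k)) * (\<Sum>j<J. \<alpha> $ j) - (\<Sum>j<J. \<alpha> $ j * z $ j)"
    by (simp add: algebra_simps sum_subtractf sum_distrib_right)
  finally show ?thesis using assms(2) by simp
qed

lemma lse_convex:
  fixes z d :: "nat \<Rightarrow> real"
  assumes J: "J > 0"
  defines "S \<equiv> (\<Sum>k<J. exp (z k))"
  shows "ln S - ln (\<Sum>k<J. exp (z k - d k)) \<le> (\<Sum>j<J. (exp (z j) / S) * d j)"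
proof -
  have S: "S > 0" unfolding S_def using J by (intro sum_pos) auto
  define m where "m = (\<Sum>j<J. (exp (z j) / S) * d j)"
  have m2: "(\<Sum>j<J. exp (z j) * d j) = S * m"
    unfolding m_def using S by (simp add: sum_distrib_left)
  have "\<And>j. exp (z j - d j) \<ge> exp (z j) * exp (- m) * (1 + (m - d j))"
  proof -
    fix j
    have "exp (z j - d j) = exp (z j) * exp (- m) * exp (m - d j)"
      by (simp add: exp_add[symmetric])
    moreover have "1 + (m - d j) \<le> exp (m - d j)" by (rule exp_ge_add_one_self)
    ultimately show "exp (z j - d j) \<ge> exp (z j) * exp (- m) * (1 + (m - d j))"
      by (simp add: mult_left_mono)
  qed
  hence "(\<Sum>k<J. exp (z k - d k)) \<ge> (\<Sum>k<J. exp (z k) * exp (- m) * (1 + (m - d k)))"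
    by (intro sum_mono) auto
  also have "(\<Sum>k<J. exp (z k) * exp (- m) * (1 + (m - d k)))
      = exp (- m) * ((1 + m) * S - (\<Sum>k<J. exp (z k) * d k))"
    unfolding S_def by (simp add: algebra_simps sum_distrib_left sum_subtractf sum.distrib)
  also have "\<dots> = exp (- m) * S" using m2 by (simp add: algebra_simps)
  finally have "ln (exp (- m) * S) \<le> ln (\<Sum>k<J. exp (z k - d k))"
    using S J by (subst ln_le_cancel_iff) (auto intro!: sum_pos)
  hence "- m + ln S \<le> ln (\<Sum>k<J. exp (z k - d k))" using S by (simp add: ln_mult)
  thus ?thesis unfolding m_def by simp
qed

lemma ce_lip:
  assumes "dim_vec z = J" "dim_vec z' = J" "\<forall>j<J. \<alpha> $ j \<in> {0, 1}" "(\<Sum>j<J. \<alpha> $ j) = 1"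
  shows "ce z \<alpha> \<le> ce z' \<alpha> + sqrt 2 * vnorm2 (z - z')"
proof -
  have J: "J > 0" using assms(4) by (cases J) auto
  define S where "S = (\<Sum>k<J. exp (z $ k))"
  have S: "S > 0" unfolding S_def using J by (intro sum_pos) auto
  define d where "d = (\<lambda>j. z $ j - z' $ j)"
  define s where "s = (\<lambda>j. exp (z $ j) / S)"
  have zz: "z' $ k = z $ k - d k" for k unfolding d_def by simp
  have lse: "ln S - ln (\<Sum>k<J. exp (z' $ k)) \<le> (\<Sum>j<J. s j * d j)"
    using lse_convex[OF J, of "\<lambda>k. z $ k" d] unfolding zz S_def s_def by simp
  have "ce z \<alpha> - ce z' \<alpha> = ln S - ln (\<Sum>k<J. exp (z' $ k)) - (\<Sum>j<J. \<alpha> $ j * d j)"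
    unfolding ce_alt[OF assms(1,4)] ce_alt[OF assms(2,4)] S_def d_def
    by (simp add: algebra_simps sum_subtractf)
  also have "\<dots> \<le> (\<Sum>j<J. s j * d j) - (\<Sum>j<J. \<alpha> $ j * d j)" using lse by simp
  also have "\<dots> = (\<Sum>j<J. (s j - \<alpha> $ j) * d j)" by (simp add: algebra_simps sum_subtractf)
  also have "\<dots> \<le> (\<Sum>j<J. \<bar>s j - \<alpha> $ j\<bar> * \<bar>d j\<bar>)"
    by (intro sum_mono) (simp add: abs_mult[symmetric])
  also have "\<dots> \<le> L2_set (\<lambda>j. s j - \<alpha> $ j) {..<J} * L2_set d {..<J}" by (rule L2_set_mult_ineq)
  also have "\<dots> \<le> sqrt 2 * vnorm2 (z - z')"
  proof (rule mult_mono)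
    have s01: "0 \<le> s j \<and> s j \<le> 1" if "j < J" for j
    proof -
      have "exp (z $ j) \<le> S" unfolding S_def using that
        by (intro member_le_sum) auto
      thus ?thesis unfolding s_def using S by auto
    qed
    have "(s j - \<alpha> $ j)\<^sup>2 \<le> s j + \<alpha> $ j" if "j < J" for j
    proof -
      have a: "\<alpha> $ j = 0 \<or> \<alpha> $ j = 1" using assms(3) that by auto
      have "s j * s j \<le> s j" using s01[OF that] by (simp add: mult_left_le)
      thus ?thesis using a s01[OF that] by (auto simp: power2_eq_square algebra_simps)
    qed
    hence "(\<Sum>j<J. (s j - \<alpha> $ j)\<^sup>2) \<le> (\<Sum>j<J. s j + \<alpha> $ j)" by (intro sum_mono) auto
    also have "\<dots> = 2"
    proof -
      have "(\<Sum>j<J. s j) = 1" unfolding s_def S_def using S S_def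
        by (simp add: sum_divide_distrib[symmetric])
      thus ?thesis using assms(4) by (simp add: sum.distrib)
    qed
    finally show "L2_set (\<lambda>j. s j - \<alpha> $ j) {..<J} \<le> sqrt 2" unfolding L2_set_def by simp
    show "L2_set d {..<J} \<le> vnorm2 (z - z')"
      unfolding vnorm2_def L2_set_def d_def using assms(1,2) by simp
  qed (auto simp: L2_set_def sum_nonneg)
  finally show ?thesis by simp
qed



lemma lin_sig:
  assumes "M \<in> carrier_mat r s" "u \<in> carrier_vec s" "v \<in> carrier_vec s"
    "lipschitz_with B \<sigma>" "B \<ge> 0"
  shows "vnorm2 (M *\<^sub>v map_vec \<sigma> u - M *\<^sub>v map_vec \<sigma> v) \<le> frob_norm M * B * vnorm2 (u - v)"
proof -
  have "M *\<^sub>v map_vec \<sigma> u - M *\<^sub>v map_vec \<sigma> v = M *\<^sub>v (map_vec \<sigma> u - map_vec \<sigma> v)"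
    using assms(1-3) by (simp add: mult_minus_distrib_mat_vec)
  hence "vnorm2 (M *\<^sub>v map_vec \<sigma> u - M *\<^sub>v map_vec \<sigma> v) \<le> frob_norm M * vnorm2 (map_vec \<sigma> u - map_vec \<sigma> v)"
    using vnorm2_mult_le[of M "map_vec \<sigma> u - map_vec \<sigma> v"] assms(1-3) by simp
  also have "\<dots> \<le> frob_norm M * (B * vnorm2 (u - v))"
    by (intro mult_left_mono vnorm2_sigma assms frob_nonneg) (use assms in auto)
  finally show ?thesis by simp
qed

lemma step_le:
  assumes "M \<in> carrier_mat r s" "u \<in> carrier_vec s" "v \<in> carrier_vec s"
    "lipschitz_with B \<sigma>" "B \<ge> 0" "bb \<in> carrier_vec r" "cc \<in> carrier_vec r"
  shows "vnorm2 ((M *\<^sub>v map_vec \<sigma> u + bb) - cc)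
     \<le> frob_norm M * B * vnorm2 (u - v) + vnorm2 ((M *\<^sub>v map_vec \<sigma> v + bb) - cc)"
proof -
  have "(M *\<^sub>v map_vec \<sigma> u + bb) - cc = (M *\<^sub>v map_vec \<sigma> u - M *\<^sub>v map_vec \<sigma> v) + ((M *\<^sub>v map_vec \<sigma> v + bb) - cc)"
    by (rule eq_vecI) (use assms in auto)
  hence "vnorm2 ((M *\<^sub>v map_vec \<sigma> u + bb) - cc) \<le>
     vnorm2 (M *\<^sub>v map_vec \<sigma> u - M *\<^sub>v map_vec \<sigma> v) + vnorm2 ((M *\<^sub>v map_vec \<sigma> v + bb) - cc)"
    using vnorm2_add_le[of "M *\<^sub>v map_vec \<sigma> u - M *\<^sub>v map_vec \<sigma> v" "(M *\<^sub>v map_vec \<sigma> v + bb) - cc"]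
      assms by simp
  thus ?thesis using lin_sig[OF assms(1-5)] by simp
qed

lemma chain:
  fixes E a rho :: "nat \<Rightarrow> real"
  assumes "E 0 = 0" "\<And>k. 1 \<le> k \<Longrightarrow> k \<le> L \<Longrightarrow> E k \<le> a k * B * E (k - 1) + rho k"
    "\<And>k. a k \<ge> 0" "B \<ge> 0"
  shows "k \<le> L \<Longrightarrow> E k \<le> (\<Sum>i\<in>{1..k}. B ^ (k - i) * (\<Prod>j\<in>{i+1..k}. a j) * rho i)"
proof (induction k)
  case 0 thus ?case using assms(1) by simp
next
  case (Suc k)
  have "E (Suc k) \<le> a (Suc k) * B * E k + rho (Suc k)" using assms(2)[of "Suc k"] Suc.prems by simp
  also have "\<dots> \<le> a (Suc k) * B * (\<Sum>i\<in>{1..k}. B ^ (k - i) * (\<Prod>j\<in>{i+1..k}. a j) * rho i) + rho (Suc k)"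
    using Suc by (intro add_right_mono mult_left_mono) (auto simp: assms)
  also have "\<dots> = (\<Sum>i\<in>{1..Suc k}. B ^ (Suc k - i) * (\<Prod>j\<in>{i+1..Suc k}. a j) * rho i)"
  proof -
    have "(\<Sum>i\<in>{1..Suc k}. B ^ (Suc k - i) * (\<Prod>j\<in>{i+1..Suc k}. a j) * rho i)
      = (\<Sum>i\<in>{1..k}. B ^ (Suc k - i) * (\<Prod>j\<in>{i+1..Suc k}. a j) * rho i) + rho (Suc k)"
      by (simp add: sum.cl_ivl_Suc)
    also have "(\<Sum>i\<in>{1..k}. B ^ (Suc k - i) * (\<Prod>j\<in>{i+1..Suc k}. a j) * rho i)
       = (\<Sum>i\<in>{1..k}. a (Suc k) * B * (B ^ (k - i) * (\<Prod>j\<in>{i+1..k}. a j) * rho i))"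
    proof (rule sum.cong)
      fix i assume "i \<in> {1..k}"
      hence "Suc k - i = Suc (k - i)" "(\<Prod>j\<in>{i+1..Suc k}. a j) = (\<Prod>j\<in>{i+1..k}. a j) * a (Suc k)"
        by (auto simp: prod.cl_ivl_Suc)
      thus "B ^ (Suc k - i) * (\<Prod>j\<in>{i+1..Suc k}. a j) * rho i
          = a (Suc k) * B * (B ^ (k - i) * (\<Prod>j\<in>{i+1..k}. a j) * rho i)" by simp
    qed simp
    finally show ?thesis by (simp add: sum_distrib_left)
  qed
  finally show ?case .
qed

lemma final_scalar:
  fixes t :: "nat \<Rightarrow> real"
  assumes "a0 \<ge> 0" "M \<ge> 0" "L \<ge> 1"
  shows "a0 + sqrt 2 * M * (\<Sum>i\<in>{1..L}. t i)
     \<le> max (sqrt 2) (2 * M) * sqrt (real L) * sqrt (a0\<^sup>2 + (\<Sum>i\<in>{1..L}. (t i)\<^sup>2))"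
proof -
  define y where "y = sqrt (\<Sum>i\<in>{1..L}. (t i)\<^sup>2)"
  have y0: "y \<ge> 0" unfolding y_def by (simp add: sum_nonneg)
  have y2: "y\<^sup>2 = (\<Sum>i\<in>{1..L}. (t i)\<^sup>2)" unfolding y_def by (simp add: sum_nonneg)
  have "(\<Sum>i\<in>{1..L}. t i) \<le> (\<Sum>i\<in>{1..L}. \<bar>1::real\<bar> * \<bar>t i\<bar>)" by (auto intro: sum_mono)
  also have "\<dots> \<le> L2_set (\<lambda>_. 1::real) {1..L} * L2_set t {1..L}" by (rule L2_set_mult_ineq)
  finally have st: "(\<Sum>i\<in>{1..L}. t i) \<le> sqrt (real L) * y" unfolding L2_set_def y_def by simp
  define q where "q = sqrt 2 * M * sqrt (real L)"
  have q0: "q \<ge> 0" unfolding q_def using assms by simp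
  have "a0 + sqrt 2 * M * (\<Sum>i\<in>{1..L}. t i) \<le> a0 + q * y"
    unfolding q_def using st assms by (simp add: mult_left_mono mult.assoc)
  also have "\<dots> \<le> sqrt (1 + q\<^sup>2) * sqrt (a0\<^sup>2 + y\<^sup>2)"
  proof -
    have "(a0 + q * y)\<^sup>2 \<le> (1 + q\<^sup>2) * (a0\<^sup>2 + y\<^sup>2)"
    proof -
      have "0 \<le> (q * a0 - y)\<^sup>2" by simp
      thus ?thesis by (simp add: power2_eq_square algebra_simps)
    qed
    hence "sqrt ((a0 + q * y)\<^sup>2) \<le> sqrt ((1 + q\<^sup>2) * (a0\<^sup>2 + y\<^sup>2))" by (rule real_sqrt_le_mono)
    thus ?thesis using assms q0 y0 by (simp add: real_sqrt_mult)
  qed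
  also have "\<dots> \<le> max (sqrt 2) (2 * M) * sqrt (real L) * sqrt (a0\<^sup>2 + y\<^sup>2)"
  proof (rule mult_right_mono)
    have q2: "q\<^sup>2 = 2 * M\<^sup>2 * real L" unfolding q_def by (simp add: power_mult_distrib)
    have "1 + q\<^sup>2 \<le> (max (sqrt 2) (2 * M))\<^sup>2 * real L"
    proof (cases "2 * M\<^sup>2 \<ge> 1")
      case True
      have "(2 * M)\<^sup>2 \<le> (max (sqrt 2) (2 * M))\<^sup>2" using assms by (intro power_mono) auto
      hence "4 * M\<^sup>2 * real L \<le> (max (sqrt 2) (2 * M))\<^sup>2 * real L"
        by (intro mult_right_mono) (auto simp: power_mult_distrib)
      moreover have "1 \<le> 2 * M\<^sup>2 * real L"
      proof -
        have "2 * M\<^sup>2 * 1 \<le> 2 * M\<^sup>2 * real L" using assms by (intro mult_left_mono) auto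
        thus ?thesis using True by linarith
      qed
      ultimately show ?thesis unfolding q2 by linarith
    next
      case False
      have "(sqrt 2)\<^sup>2 \<le> (max (sqrt 2) (2 * M))\<^sup>2" using assms by (intro power_mono) auto
      hence "2 * real L \<le> (max (sqrt 2) (2 * M))\<^sup>2 * real L" by (intro mult_right_mono) auto
      moreover have "2 * M\<^sup>2 * real L \<le> real L" using False
        by (intro mult_left_le_one_le) auto
      moreover have "1 \<le> real L" using assms by simp
      ultimately show ?thesis unfolding q2 by linarith
    qed
    hence "sqrt (1 + q\<^sup>2) \<le> sqrt ((max (sqrt 2) (2 * M))\<^sup>2 * real L)" by (rule real_sqrt_le_mono)
    also have "\<dots> = max (sqrt 2) (2 * M) * sqrt (real L)" using assms by (simp add: real_sqrt_mult)
    finally show "sqrt (1 + q\<^sup>2) \<le> max (sqrt 2) (2 * M) * sqrt (real L)" .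
  qed simp
  finally show ?thesis using y2 by simp
qed



lemma col_res:
  assumes "A \<in> carrier_mat r s" "C \<in> carrier_mat s N" "bv \<in> carrier_vec r" "D \<in> carrier_mat r N" "q < N"
  shows "col (A * C + bcast bv N - D) q = (A *\<^sub>v col C q + bv) - col D q"
  by (rule eq_vecI) (use assms in \<open>auto simp: bcast_def\<close>)

lemma conv_dim:
  assumes "\<forall>l\<in>{1..L1}. K l \<in> carrier_mat (m l) (if l = 1 then d else p (l - 1))
                  \<and> P l \<in> carrier_mat (p l) (m l)
                  \<and> b l \<in> carrier_vec (m l)"
    and "x \<in> carrier_vec d"
  shows "1 \<le> l \<Longrightarrow> l \<le> L1 \<Longrightarrow> conv_pre \<sigma> K b P x l \<in> carrier_vec (m l)"
proof (induction l)
  case 0 thus ?case by simp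
next
  case (Suc l)
  show ?case
  proof (cases l)
    case 0
    have "K 1 \<in> carrier_mat (m 1) d" "b 1 \<in> carrier_vec (m 1)" using bspec[OF assms(1), of 1] Suc.prems 0 by auto
    thus ?thesis using 0 assms(2) by auto
  next
    case (Suc l')
    have "K (Suc (Suc l')) \<in> carrier_mat (m (Suc (Suc l'))) (p (Suc l'))"
         "P (Suc l') \<in> carrier_mat (p (Suc l')) (m (Suc l'))"
         "b (Suc (Suc l')) \<in> carrier_vec (m (Suc (Suc l')))"
      using bspec[OF assms(1), of "Suc (Suc l')"] bspec[OF assms(1), of "Suc l'"] Suc Suc.prems by auto
    moreover have "conv_pre \<sigma> K b P x (Suc l') \<in> carrier_vec (m (Suc l'))"
      using Suc.IH Suc Suc.prems by auto
    ultimately show ?thesis using Suc by auto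
  qed
qed

lemma fc_dim:
  assumes "\<forall>l\<in>{1..<L2}. W l \<in> carrier_mat (n l) (if l = 1 then p L1 else n (l - 1))
                  \<and> bh l \<in> carrier_vec (n l)"
    and "P L1 \<in> carrier_mat (p L1) (m L1)"
    and "conv_pre \<sigma> K b P x L1 \<in> carrier_vec (m L1)"
  shows "1 \<le> l \<Longrightarrow> l < L2 \<Longrightarrow> fc_pre \<sigma> L1 K b P W bh x l \<in> carrier_vec (n l)"
proof (induction l)
  case 0 thus ?case by simp
next
  case (Suc l)
  show ?case
  proof (cases l)
    case 0
    have "W 1 \<in> carrier_mat (n 1) (p L1)" "bh 1 \<in> carrier_vec (n 1)" using bspec[OF assms(1), of 1] Suc.prems 0 by auto
    thus ?thesis using 0 assms(2,3) by auto
  next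
    case (Suc l')
    have "W (Suc (Suc l')) \<in> carrier_mat (n (Suc (Suc l'))) (n (Suc l'))"
         "bh (Suc (Suc l')) \<in> carrier_vec (n (Suc (Suc l')))"
      using bspec[OF assms(1), of "Suc (Suc l')"] Suc Suc.prems by auto
    moreover have "fc_pre \<sigma> L1 K b P W bh x (Suc l') \<in> carrier_vec (n (Suc l'))"
      using Suc.IH Suc Suc.prems by auto
    ultimately show ?thesis using Suc by auto
  qed
qed

lemma conv_step: "2 \<le> l \<Longrightarrow> conv_pre \<sigma> K b P x l = (K l * P (l - 1)) *\<^sub>v map_vec \<sigma> (conv_pre \<sigma> K b P x (l - 1)) + b l"
  by (cases l; cases "l - 1") auto

lemma fc_step: "2 \<le> l \<Longrightarrow> fc_pre \<sigma> L1 K b P W bh x l = W l *\<^sub>v map_vec \<sigma> (fc_pre \<sigma> L1 K b P W bh x (l - 1)) + bh l"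
  by (cases l; cases "l - 1") auto

lemma pow_le_M:
  fixes B :: real
  assumes "B \<ge> 0" "1 \<le> e" "e \<le> L"
  shows "B ^ e \<le> max B (B ^ L)"
proof (cases "B \<le> 1")
  case True
  have "B ^ e \<le> B ^ 1" using assms True by (intro power_decreasing) auto
  thus ?thesis by simp
next
  case False
  have "B ^ e \<le> B ^ L" using assms False by (intro power_increasing) auto
  thus ?thesis by simp
qed



lemma prod_split_conv:
  fixes a :: "nat \<Rightarrow> real"
  assumes "i \<le> L1" "2 \<le> L2"
  shows "(\<Prod>j\<in>{i+1..L1+L2}. a j) = (\<Prod>j\<in>{i+1..L1}. a j) * a (L1+1) * (\<Prod>k\<in>{2..L2}. a (k + L1))"
proof -
  have "(\<Prod>j\<in>{i+1..L1+L2}. a j) = (\<Prod>j\<in>{i+1..L1}. a j) * (\<Prod>j\<in>{L1+1..L1+L2}. a j)"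
    using prod.ub_add_nat[of "i+1" L1 a L2] assms by simp
  also have "(\<Prod>j\<in>{L1+1..L1+L2}. a j) = a (L1+1) * (\<Prod>j\<in>{Suc (L1+1)..L1+L2}. a j)"
    using assms by (intro prod.atLeast_Suc_atMost) simp
  also have "(\<Prod>j\<in>{Suc (L1+1)..L1+L2}. a j) = (\<Prod>j\<in>{2+L1..L2+L1}. a j)"
    by (simp add: add.commute)
  also have "\<dots> = (\<Prod>k\<in>{2..L2}. a (k + L1))" by (rule prod.shift_bounds_cl_nat_ivl)
  finally show ?thesis by (simp add: mult.assoc)
qed

lemma prod_split_fc:
  fixes a :: "nat \<Rightarrow> real"
  shows "(\<Prod>j\<in>{L1+l+1..L1+L2}. a j) = (\<Prod>k\<in>{l+1..L2}. a (k + L1))"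
proof -
  have "(\<Prod>j\<in>{L1+l+1..L1+L2}. a j) = (\<Prod>j\<in>{(l+1)+L1..L2+L1}. a j)"
    by (simp add: add.commute add.left_commute)
  also have "\<dots> = (\<Prod>k\<in>{l+1..L2}. a (k + L1))" by (rule prod.shift_bounds_cl_nat_ivl)
  finally show ?thesis .
qed

lemma sum_split:
  fixes f :: "nat \<Rightarrow> real"
  assumes "1 \<le> L1" "2 \<le> L2"
  shows "(\<Sum>i\<in>{1..L1 + L2 - 1}. f i) = f 1 + (\<Sum>i\<in>{2..L1}. f i) + f (L1 + 1) + (\<Sum>l\<in>{2..L2-1}. f (l + L1))"
proof -
  have e: "L1 + L2 - 1 = L1 + (L2 - 1)" using assms by simp
  have "(\<Sum>i\<in>{1..L1 + (L2 - 1)}. f i) = (\<Sum>i\<in>{1..L1}. f i) + (\<Sum>i\<in>{L1+1..L1 + (L2 - 1)}. f i)"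
    using sum.ub_add_nat[of 1 L1 f "L2 - 1"] by simp
  also have "(\<Sum>i\<in>{1..L1}. f i) = f 1 + (\<Sum>i\<in>{Suc 1..L1}. f i)"
    using assms by (intro sum.atLeast_Suc_atMost) simp
  also have "(\<Sum>i\<in>{L1+1..L1 + (L2 - 1)}. f i) = (\<Sum>i\<in>{1+L1..(L2-1)+L1}. f i)"
    by (simp add: add.commute)
  also have "\<dots> = (\<Sum>l\<in>{1..L2-1}. f (l + L1))" by (rule sum.shift_bounds_cl_nat_ivl)
  also have "\<dots> = f (1 + L1) + (\<Sum>l\<in>{Suc 1..L2-1}. f (l + L1))"
    using assms by (intro sum.atLeast_Suc_atMost) simp
  finally show ?thesis unfolding e numeral_2_eq_2 by (simp add: add.commute add.left_commute)
qed



theorem theorem4p1: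
  fixes \<sigma> :: "real \<Rightarrow> real" and B :: real
    and L1 L2 d N J :: nat
    and m p n :: "nat \<Rightarrow> nat"
    and X A :: "real mat"
    and K P W c ch :: "nat \<Rightarrow> real mat"
    and b bh :: "nat \<Rightarrow> real vec"
  assumes "L1 \<ge> 1" and "L2 \<ge> 2"
    and "X \<in> carrier_mat d N"
    and "A \<in> carrier_mat J N" and "one_hot_cols A"
    and "B > 0" and "lipschitz_with B \<sigma>"
    and "\<forall>l\<in>{1..L1}. K l \<in> carrier_mat (m l) (if l = 1 then d else p (l - 1))
                  \<and> P l \<in> carrier_mat (p l) (m l)
                  \<and> b l \<in> carrier_vec (m l)
                  \<and> c l \<in> carrier_mat (m l) N"
    and "\<forall>l\<in>{1..<L2}. W l \<in> carrier_mat (n l) (if l = 1 then p L1 else n (l - 1))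
                  \<and> bh l \<in> carrier_vec (n l)
                  \<and> ch l \<in> carrier_mat (n l) N"
    and "W L2 \<in> carrier_mat J (n (L2 - 1))"
  shows "L_loss (phi_CNN_mat \<sigma> L1 L2 K b P W bh X) A
         \<le> max (sqrt 2) (max (2 * B) (2 * B ^ (L1 + L2 - 1)))
            * sqrt (real (L1 + L2 - 1))
            * L_S_CNN \<sigma> L1 L2 X A K b c P W bh ch"
proof -
  note L1 = assms(1) and L2 = assms(2) and B0 = assms(6) and lip = assms(7)
  have XN: "dim_col X = N" "dim_row X = d" using assms(3) by auto
  have AN: "dim_col A = N" "dim_row A = J" using assms(4) by auto
  have hK: "K l \<in> carrier_mat (m l) (if l = 1 then d else p (l - 1))" "P l \<in> carrier_mat (p l) (m l)"
    "b l \<in> carrier_vec (m l)" "c l \<in> carrier_mat (m l) N" if "1 \<le> l" "l \<le> L1" for l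
    using bspec[OF assms(8), of l] that by auto
  have hW: "W l \<in> carrier_mat (n l) (if l = 1 then p L1 else n (l - 1))"
    "bh l \<in> carrier_vec (n l)" "ch l \<in> carrier_mat (n l) N" if "1 \<le> l" "l < L2" for l
    using bspec[OF assms(9), of l] that by auto
  have WL2: "W L2 \<in> carrier_mat J (n (L2 - 1))" by (rule assms(10))
  define \<Phi> where "\<Phi> = phi_CNN_mat \<sigma> L1 L2 K b P W bh X"
  have dPhi: "dim_col \<Phi> = N" unfolding \<Phi>_def phi_CNN_mat_def using XN by simp
  show ?thesis
  proof (cases "N = 0")
    case True
    thus ?thesis unfolding \<Phi>_def[symmetric] L_loss_def L_S_CNN_def using dPhi XN by simp
  next
    case False
    hence Npos: "N > 0" by simp
    define L where "L = L1 + L2 - 1"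
    have L1L: "L1 < L" "L \<ge> 1" "L - L1 = L2 - 1" "L + 1 = L1 + L2" unfolding L_def using L1 L2 by auto
    define Q where "Q = W L2 * map_mat \<sigma> (ch (L2 - 1))"
    define zc where "zc q l = conv_pre \<sigma> K b P (col X q) l" for q l
    define zf where "zf q l = fc_pre \<sigma> L1 K b P W bh (col X q) l" for q l
    define Rc where "Rc l = (if l = 1 then K 1 * X + bcast (b 1) N - c 1
       else K l * P (l - 1) * map_mat \<sigma> (c (l - 1)) + bcast (b l) N - c l)" for l
    define Rf where "Rf l = (if l = 1 then W 1 * P L1 * map_mat \<sigma> (c L1) + bcast (bh 1) N - ch 1
       else W l * map_mat \<sigma> (ch (l - 1)) + bcast (bh l) N - ch l)" for l
    define R where "R i = (if i \<le> L1 then Rc i else Rf (i - L1))" for i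
    define a where "a k = (if k \<le> L1 then frob_norm (K k * P (k - 1))
       else if k = L1 + 1 then frob_norm (W 1 * P L1) else frob_norm (W (k - L1)))" for k
    define E where "E q k = (if k = 0 then 0 else if k \<le> L1 then vnorm2 (zc q k - col (c k) q)
       else if k \<le> L then vnorm2 (zf q (k - L1) - col (ch (k - L1)) q)
       else vnorm2 (col \<Phi> q - col Q q))" for q k
    define rho where "rho q k = (if k \<le> L then vnorm2 (col (R k) q) else 0)" for q k
    have a0: "a k \<ge> 0" for k unfolding a_def by (simp add: frob_nonneg)
    have xq: "col X q \<in> carrier_vec d" for q using XN(2) by (intro carrier_vecI) simp
    have zc_dim: "zc q l \<in> carrier_vec (m l)" if "1 \<le> l" "l \<le> L1" for q l
      unfolding zc_def by (rule conv_dim[OF _ xq]) (use assms(8) that in auto)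
    have zf_dim: "zf q l \<in> carrier_vec (n l)" if "1 \<le> l" "l < L2" for q l
      unfolding zf_def
      by (rule fc_dim) (use assms(9) hK(2)[of L1] zc_dim[of L1 q, unfolded zc_def] that L1 in auto)
    have pc: "phi_CNN \<sigma> L1 L2 K b P W bh v \<in> carrier_vec J" for v
      unfolding phi_CNN_def using carrier_matD[OF WL2] by (intro carrier_vecI) simp
    have colPhi: "col \<Phi> q = W L2 *\<^sub>v map_vec \<sigma> (zf q (L2 - 1))" if "q < N" for q
    proof -
      have "col \<Phi> q = (map (\<lambda>n. phi_CNN \<sigma> L1 L2 K b P W bh (col X n)) [0..<dim_col X]) ! q"
        unfolding \<Phi>_def phi_CNN_mat_def carrier_matD[OF WL2]
        by (rule col_mat_of_cols) (use that XN pc in auto)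
      thus ?thesis using that XN unfolding phi_CNN_def zf_def by simp
    qed
    have chN: "ch (L2 - 1) \<in> carrier_mat (n (L2 - 1)) N" using hW(3)[of "L2 - 1"] L2 by auto
    have colQ: "col Q q = W L2 *\<^sub>v map_vec \<sigma> (col (ch (L2 - 1)) q)" if "q < N" for q
    proof -
      have "col Q q = W L2 *\<^sub>v col (map_mat \<sigma> (ch (L2 - 1))) q"
        unfolding Q_def by (rule col_mult2[OF WL2]) (use chN that in auto)
      thus ?thesis using chN that by simp
    qed
    have dQ: "dim_col Q = N" "dim_row Q = J" unfolding Q_def using WL2 chN by auto
    have dR: "dim_col (R i) = N" if "1 \<le> i" "i \<le> L" for i
    proof (cases "i \<le> L1")
      case True thus ?thesis unfolding R_def Rc_def using hK(4)[of i] hK(4)[of 1] that L1 by auto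
    next
      case False
      hence "1 \<le> i - L1" "i - L1 < L2" using that L1L by auto
      thus ?thesis unfolding R_def Rf_def using hW(3)[of "i - L1"] hW(3)[of 1] that False L2 by auto
    qed
    have colsig: "col (map_mat \<sigma> C) q = map_vec \<sigma> (col C q)" if "C \<in> carrier_mat r N" "q < N" for C r q
      using that by simp
    have ccol: "col (c l) q \<in> carrier_vec (m l)" if "1 \<le> l" "l \<le> L1" for l q
      using hK(4)[OF that] by (intro carrier_vecI) auto
    have chcol: "col (ch l) q \<in> carrier_vec (n l)" if "1 \<le> l" "l < L2" for l q
      using hW(3)[OF that] by (intro carrier_vecI) auto
    have step: "E q k \<le> a k * B * E q (k - 1) + rho q k" if q: "q < N" and k: "1 \<le> k" "k \<le> L + 1" for q k
    proof -
      consider (c1) "k = 1" | (cc) "2 \<le> k" "k \<le> L1" | (f1) "k = L1 + 1"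
        | (ff) "L1 + 2 \<le> k" "k \<le> L" | (out) "k = L + 1" using k L1L by linarith
      then show ?thesis
      proof cases
        case c1
        have "col (K 1 * X + bcast (b 1) N - c 1) q = (K 1 *\<^sub>v col X q + b 1) - col (c 1) q"
          by (rule col_res[of _ "m 1" d]) (use hK[of 1] L1 assms(3) q in auto)
        moreover have "zc q 1 = K 1 *\<^sub>v col X q + b 1" unfolding zc_def by simp
        ultimately have "E q 1 = rho q 1"
          unfolding E_def rho_def R_def Rc_def using L1 L1L by simp
        thus ?thesis using c1 E_def by simp
      next
        case cc
        have km: "1 \<le> k - 1" "k - 1 \<le> L1" "1 \<le> k" using cc by auto
        note ck1 = hK(4)[OF km(1,2)] and Kk = hK(1)[OF km(3) cc(2)] and Pk1 = hK(2)[OF km(1,2)]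
          and bk = hK(3)[OF km(3) cc(2)] and ck = hK(4)[OF km(3) cc(2)]
        define M where "M = K k * P (k - 1)"
        have M: "M \<in> carrier_mat (m k) (m (k - 1))" unfolding M_def
          using Kk Pk1 cc by auto
        have "col (M * map_mat \<sigma> (c (k - 1)) + bcast (b k) N - c k) q
           = (M *\<^sub>v col (map_mat \<sigma> (c (k - 1))) q + b k) - col (c k) q"
          by (rule col_res[OF M]) (use ck1 bk ck q in auto)
        also have "col (map_mat \<sigma> (c (k - 1))) q = map_vec \<sigma> (col (c (k - 1)) q)"
          by (rule col_map_mat) (use ck1 q in auto)
        finally have r: "rho q k = vnorm2 ((M *\<^sub>v map_vec \<sigma> (col (c (k - 1)) q) + b k) - col (c k) q)"
          unfolding rho_def R_def Rc_def M_def using cc L1L by auto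
        have z: "zc q k = M *\<^sub>v map_vec \<sigma> (zc q (k - 1)) + b k" unfolding zc_def M_def
          using cc by (simp add: conv_step)
        have "vnorm2 ((M *\<^sub>v map_vec \<sigma> (zc q (k - 1)) + b k) - col (c k) q)
          \<le> frob_norm M * B * vnorm2 (zc q (k - 1) - col (c (k - 1)) q)
             + vnorm2 ((M *\<^sub>v map_vec \<sigma> (col (c (k - 1)) q) + b k) - col (c k) q)"
          by (rule step_le[OF M]) (use zc_dim[OF km(1,2), of q] ccol[OF km(1,2), of q] lip B0 bk ccol[OF km(3) cc(2), of q] in auto)
        moreover have "E q k = vnorm2 ((M *\<^sub>v map_vec \<sigma> (zc q (k - 1)) + b k) - col (c k) q)"
          unfolding E_def z using cc by simp
        moreover have "E q (k - 1) = vnorm2 (zc q (k - 1) - col (c (k - 1)) q)"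
          unfolding E_def using km by (simp del: One_nat_def)
        moreover have "a k = frob_norm M" unfolding a_def M_def using cc by simp
        ultimately show ?thesis using r by simp
      next
        case f1
        have LL: "1 \<le> L1" "L1 \<le> L1" "1 \<le> (1::nat)" "1 < L2" using L1 L2 by auto
        note cL1 = hK(4)[OF LL(1,2)] and PL1 = hK(2)[OF LL(1,2)]
          and W1 = hW(1)[OF LL(3,4)] and bh1 = hW(2)[OF LL(3,4)] and ch1 = hW(3)[OF LL(3,4)]
        define M where "M = W 1 * P L1"
        have M: "M \<in> carrier_mat (n 1) (m L1)" unfolding M_def
          using W1 PL1 by auto
        have "col (M * map_mat \<sigma> (c L1) + bcast (bh 1) N - ch 1) q
           = (M *\<^sub>v col (map_mat \<sigma> (c L1)) q + bh 1) - col (ch 1) q"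
          by (rule col_res[OF M]) (use cL1 bh1 ch1 q in auto)
        also have "col (map_mat \<sigma> (c L1)) q = map_vec \<sigma> (col (c L1) q)"
          by (rule col_map_mat) (use cL1 q in auto)
        finally have r: "rho q k = vnorm2 ((M *\<^sub>v map_vec \<sigma> (col (c L1) q) + bh 1) - col (ch 1) q)"
          unfolding rho_def R_def Rf_def M_def using f1 L1L by auto
        have z: "zf q 1 = M *\<^sub>v map_vec \<sigma> (zc q L1) + bh 1" unfolding zc_def zf_def M_def
          by simp
        have "vnorm2 ((M *\<^sub>v map_vec \<sigma> (zc q L1) + bh 1) - col (ch 1) q)
          \<le> frob_norm M * B * vnorm2 (zc q L1 - col (c L1) q)
             + vnorm2 ((M *\<^sub>v map_vec \<sigma> (col (c L1) q) + bh 1) - col (ch 1) q)"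
          by (rule step_le[OF M]) (use zc_dim[OF LL(1,2), of q] ccol[OF LL(1,2), of q] lip B0 bh1 chcol[OF LL(3,4), of q] in auto)
        moreover have "E q k = vnorm2 ((M *\<^sub>v map_vec \<sigma> (zc q L1) + bh 1) - col (ch 1) q)"
          unfolding E_def z[symmetric] using f1 L1L by simp
        moreover have "E q (k - 1) = vnorm2 (zc q L1 - col (c L1) q)"
          unfolding E_def using f1 L1 by simp
        moreover have "a k = frob_norm M" unfolding a_def M_def using f1 by simp
        ultimately show ?thesis using r by simp
      next
        case ff
        define l where "l = k - L1"
        have l: "2 \<le> l" "l < L2" "k = l + L1" unfolding l_def using ff L1L by auto
        have lm: "1 \<le> l - 1" "l - 1 < L2" "1 \<le> l" using l by auto
        note chl1 = hW(3)[OF lm(1,2)] and Wl = hW(1)[OF lm(3) l(2)] and bhl = hW(2)[OF lm(3) l(2)]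
          and chl = hW(3)[OF lm(3) l(2)]
        define M where "M = W l"
        have M: "M \<in> carrier_mat (n l) (n (l - 1))" unfolding M_def
          using Wl l by auto
        have "col (M * map_mat \<sigma> (ch (l - 1)) + bcast (bh l) N - ch l) q
           = (M *\<^sub>v col (map_mat \<sigma> (ch (l - 1))) q + bh l) - col (ch l) q"
          by (rule col_res[OF M]) (use chl1 bhl chl q in auto)
        also have "col (map_mat \<sigma> (ch (l - 1))) q = map_vec \<sigma> (col (ch (l - 1)) q)"
          by (rule col_map_mat) (use chl1 q in auto)
        finally have r: "rho q k = vnorm2 ((M *\<^sub>v map_vec \<sigma> (col (ch (l - 1)) q) + bh l) - col (ch l) q)"
          unfolding rho_def R_def Rf_def M_def using ff l L1L by auto
        have z: "zf q l = M *\<^sub>v map_vec \<sigma> (zf q (l - 1)) + bh l" unfolding zf_def M_def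
          using l by (simp add: fc_step)
        have "vnorm2 ((M *\<^sub>v map_vec \<sigma> (zf q (l - 1)) + bh l) - col (ch l) q)
          \<le> frob_norm M * B * vnorm2 (zf q (l - 1) - col (ch (l - 1)) q)
             + vnorm2 ((M *\<^sub>v map_vec \<sigma> (col (ch (l - 1)) q) + bh l) - col (ch l) q)"
          by (rule step_le[OF M]) (use zf_dim[OF lm(1,2), of q] chcol[OF lm(1,2), of q] lip B0 bhl chcol[OF lm(3) l(2), of q] in auto)
        moreover have "E q k = vnorm2 ((M *\<^sub>v map_vec \<sigma> (zf q (l - 1)) + bh l) - col (ch l) q)"
          unfolding E_def z[symmetric] using ff l by simp
        moreover have "E q (k - 1) = vnorm2 (zf q (l - 1) - col (ch (l - 1)) q)"
          unfolding E_def using ff l by auto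
        moreover have "a k = frob_norm M" unfolding a_def M_def using ff l by simp
        ultimately show ?thesis using r by simp
      next
        case out
        have LL: "1 \<le> L2 - 1" "L2 - 1 < L2" using L2 by auto
        have kL: "k - 1 = L" using out by simp
        have e1: "E q (k - 1) = vnorm2 (zf q (L2 - 1) - col (ch (L2 - 1)) q)"
          unfolding kL E_def using L1L by simp
        have e2: "a k = frob_norm (W L2)" unfolding a_def using out L1L by simp
        have e3: "rho q k = 0" unfolding rho_def using out by simp
        have "E q k = vnorm2 (W L2 *\<^sub>v map_vec \<sigma> (zf q (L2 - 1)) - W L2 *\<^sub>v map_vec \<sigma> (col (ch (L2 - 1)) q))"
          unfolding E_def using out colPhi[OF q] colQ[OF q] L1L by simp
        also have "\<dots> \<le> frob_norm (W L2) * B * vnorm2 (zf q (L2 - 1) - col (ch (L2 - 1)) q)"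
          by (rule lin_sig[OF WL2]) (use zf_dim[OF LL, of q] chcol[OF LL, of q] lip B0 in auto)
        finally show ?thesis unfolding e1 e2 e3 by simp
      qed
    qed
    have chain_q: "E q (L + 1) \<le> (\<Sum>i\<in>{1..L+1}. B ^ (L + 1 - i) * (\<Prod>j\<in>{i+1..L+1}. a j) * rho q i)"
      if "q < N" for q
    proof (rule chain[of "E q" "L + 1" a B "rho q"])
      show "E q 0 = 0" unfolding E_def by simp
      show "\<And>k. 1 \<le> k \<Longrightarrow> k \<le> L + 1 \<Longrightarrow> E q k \<le> a k * B * E q (k - 1) + rho q k"
        using step[OF that] by blast
    qed (use a0 B0 in auto)
    define M where "M = max B (B ^ L)"
    define t where "t i = (\<Prod>j\<in>{i+1..L+1}. a j) * frob_norm (R i)" for i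
    define a0 where "a0 = vnorm2 (L_vec Q A)"
    have t0: "t i \<ge> 0" for i unfolding t_def using a0 by (simp add: prod_nonneg frob_nonneg)
    have M0: "M \<ge> 0" unfolding M_def using B0 by simp
    have EL: "E q (L + 1) = vnorm2 (col \<Phi> q - col Q q)" for q unfolding E_def using L1L by simp
    have one_hot: "\<forall>j<J. col A q $ j \<in> {0, 1}" "(\<Sum>j<J. col A q $ j) = 1" if "q < N" for q
      using assms(5) that AN unfolding one_hot_cols_def by auto
    have ce_le: "ce (col \<Phi> q) (col A q) \<le> ce (col Q q) (col A q) + sqrt 2 * E q (L + 1)" if q: "q < N" for q
      unfolding EL
      by (rule ce_lip[of _ J]) (use colPhi[OF q] carrier_matD[OF WL2] dQ one_hot[OF q] in auto)
    have sumce: "(\<Sum>q<N. ce (col Q q) (col A q)) \<le> sqrt (real N) * a0"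
    proof -
      have "a0 = sqrt (\<Sum>q<N. (ce (col Q q) (col A q))\<^sup>2)"
        unfolding a0_def vnorm2_def L_vec_def dQ by simp
      thus ?thesis using sum_le_sqrt_L2[of "\<lambda>q. ce (col Q q) (col A q)" N] by simp
    qed
    have coef0: "B ^ (L + 1 - i) * (\<Prod>j\<in>{i+1..L+1}. a j) \<ge> 0" for i
      using B0 a0 by (simp add: prod_nonneg)
    have sumE: "(\<Sum>q<N. E q (L + 1)) \<le> sqrt (real N) * (\<Sum>i\<in>{1..L}. B ^ (L + 1 - i) * t i)"
    proof -
      have "(\<Sum>q<N. E q (L + 1)) \<le> (\<Sum>q<N. \<Sum>i\<in>{1..L+1}. B ^ (L + 1 - i) * (\<Prod>j\<in>{i+1..L+1}. a j) * rho q i)"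
        using chain_q by (intro sum_mono) auto
      also have "\<dots> = (\<Sum>i\<in>{1..L+1}. B ^ (L + 1 - i) * (\<Prod>j\<in>{i+1..L+1}. a j) * (\<Sum>q<N. rho q i))"
        by (subst sum.swap) (simp add: sum_distrib_left)
      also have "\<dots> \<le> (\<Sum>i\<in>{1..L+1}. B ^ (L + 1 - i) * (\<Prod>j\<in>{i+1..L+1}. a j) *
            (if i \<le> L then sqrt (real N) * frob_norm (R i) else 0))"
      proof (rule sum_mono)
        fix i assume i: "i \<in> {1..L+1}"
        have "(\<Sum>q<N. rho q i) \<le> (if i \<le> L then sqrt (real N) * frob_norm (R i) else 0)"
        proof (cases "i \<le> L")
          case True
          have "(\<Sum>q<N. rho q i) = (\<Sum>q<dim_col (R i). vnorm2 (col (R i) q))"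
            unfolding rho_def using dR[of i] i True by simp
          also have "\<dots> \<le> sqrt (real (dim_col (R i))) * frob_norm (R i)" by (rule sum_cols_le)
          finally show ?thesis using dR[OF _ True] i True by simp
        qed (simp add: rho_def)
        thus "B ^ (L + 1 - i) * (\<Prod>j\<in>{i+1..L+1}. a j) * (\<Sum>q<N. rho q i)
          \<le> B ^ (L + 1 - i) * (\<Prod>j\<in>{i+1..L+1}. a j) * (if i \<le> L then sqrt (real N) * frob_norm (R i) else 0)"
          by (rule mult_left_mono) (rule coef0)
      qed
      also have "\<dots> = (\<Sum>i\<in>{1..L}. B ^ (L + 1 - i) * (\<Prod>j\<in>{i+1..L+1}. a j) *
            (sqrt (real N) * frob_norm (R i)))"
        by (simp add: sum.cl_ivl_Suc)
      also have "\<dots> = sqrt (real N) * (\<Sum>i\<in>{1..L}. B ^ (L + 1 - i) * t i)"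
        unfolding t_def by (simp add: sum_distrib_left algebra_simps)
      finally show ?thesis .
    qed
    have tM: "(\<Sum>i\<in>{1..L}. B ^ (L + 1 - i) * t i) \<le> M * (\<Sum>i\<in>{1..L}. t i)"
      unfolding sum_distrib_left
    proof (rule sum_mono)
      fix i assume i: "i \<in> {1..L}"
      have "B ^ (L + 1 - i) \<le> M" unfolding M_def using i B0 by (intro pow_le_M) auto
      thus "B ^ (L + 1 - i) * t i \<le> M * t i" by (rule mult_right_mono) (rule t0)
    qed
    have Nsq: "sqrt (real N) > 0" using Npos by simp
    have "L_loss \<Phi> A = (1 / real N) * (\<Sum>q<N. ce (col \<Phi> q) (col A q))"
      unfolding L_loss_def dPhi by simp
    also have "\<dots> \<le> (1 / real N) * ((\<Sum>q<N. ce (col Q q) (col A q)) + sqrt 2 * (\<Sum>q<N. E q (L + 1)))"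
    proof (rule mult_left_mono)
      have "(\<Sum>q<N. ce (col \<Phi> q) (col A q)) \<le> (\<Sum>q<N. ce (col Q q) (col A q) + sqrt 2 * E q (L + 1))"
        by (rule sum_mono) (use ce_le in auto)
      thus "(\<Sum>q<N. ce (col \<Phi> q) (col A q)) \<le> (\<Sum>q<N. ce (col Q q) (col A q)) + sqrt 2 * (\<Sum>q<N. E q (L + 1))"
        by (simp add: sum.distrib sum_distrib_left)
    qed simp
    also have "\<dots> \<le> (1 / real N) * (sqrt (real N) * a0 + sqrt 2 * (sqrt (real N) * (M * (\<Sum>i\<in>{1..L}. t i))))"
    proof -
      have "(\<Sum>q<N. E q (L + 1)) \<le> sqrt (real N) * (M * (\<Sum>i\<in>{1..L}. t i))"
        by (rule order_trans[OF sumE mult_left_mono[OF tM]]) simp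
      thus ?thesis using sumce by (intro mult_left_mono add_mono) auto
    qed
    also have "\<dots> = (1 / sqrt (real N)) * (a0 + sqrt 2 * M * (\<Sum>i\<in>{1..L}. t i))"
    proof -
      have "real N = sqrt (real N) * sqrt (real N)" by simp
      thus ?thesis using Nsq by (simp add: field_simps)
    qed
    also have "\<dots> \<le> (1 / sqrt (real N)) * (max (sqrt 2) (2 * M) * sqrt (real L) * sqrt (a0\<^sup>2 + (\<Sum>i\<in>{1..L}. (t i)\<^sup>2)))"
      by (intro mult_left_mono final_scalar) (use L1L M0 in \<open>auto simp: a0_def vnorm2_nonneg\<close>)
    finally have main: "L_loss \<Phi> A \<le> (1 / sqrt (real N)) * (max (sqrt 2) (2 * M) * sqrt (real L) * sqrt (a0\<^sup>2 + (\<Sum>i\<in>{1..L}. (t i)\<^sup>2)))" .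
    have tc: "(t i)\<^sup>2 = omega L1 L2 K P W i * (frob_norm (Rc i))\<^sup>2" if i: "1 \<le> i" "i \<le> L1" for i
    proof -
      have p1: "(\<Prod>j\<in>{i+1..L1}. a j) = (\<Prod>j\<in>{i+1..L1}. frob_norm (K j * P (j - 1)))"
        by (rule prod.cong) (auto simp: a_def)
      have p2: "(\<Prod>k\<in>{2..L2}. a (k + L1)) = (\<Prod>k\<in>{2..L2}. frob_norm (W k))"
        by (rule prod.cong) (auto simp: a_def)
      have p3: "a (L1 + 1) = frob_norm (W 1 * P L1)" by (simp add: a_def)
      have p: "(\<Prod>j\<in>{i+1..L+1}. a j) = (\<Prod>j\<in>{i+1..L1}. frob_norm (K j * P (j - 1)))
          * frob_norm (W 1 * P L1) * (\<Prod>k\<in>{2..L2}. frob_norm (W k))"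
        unfolding L1L(4) prod_split_conv[OF i(2) L2] p1 p2 p3 ..
      show ?thesis unfolding t_def p omega_def R_def using i
        by (simp add: power_mult_distrib prod_power_distrib mult_ac)
    qed
    have tf: "(t (l + L1))\<^sup>2 = omega_hat L2 W l * (frob_norm (Rf l))\<^sup>2" if l: "1 \<le> l" "l \<le> L2 - 1" for l
    proof -
      have p2: "(\<Prod>k\<in>{l+1..L2}. a (k + L1)) = (\<Prod>k\<in>{l+1..L2}. frob_norm (W k))"
        by (rule prod.cong) (use l in \<open>auto simp: a_def\<close>)
      have p: "(\<Prod>j\<in>{l+L1+1..L+1}. a j) = (\<Prod>k\<in>{l+1..L2}. frob_norm (W k))"
      proof -
        have e: "l + L1 + 1 = L1 + l + 1" by simp
        show ?thesis unfolding L1L(4) e prod_split_fc[of a L1 l L2] p2 ..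
      qed
      show ?thesis unfolding t_def p omega_hat_def R_def using l
        by (simp add: power_mult_distrib prod_power_distrib mult_ac)
    qed
    have Teq: "T_CNN \<sigma> L1 L2 X A K b c P W bh ch = a0\<^sup>2 + (\<Sum>i\<in>{1..L}. (t i)\<^sup>2)"
    proof -
      have s1: "(\<Sum>l\<in>{2..L1}. omega L1 L2 K P W l *
          (frob_norm (K l * P (l - 1) * map_mat \<sigma> (c (l - 1)) + bcast (b l) N - c l))\<^sup>2)
          = (\<Sum>i\<in>{2..L1}. (t i)\<^sup>2)"
        by (rule sum.cong) (auto simp: tc Rc_def)
      have s2: "omega L1 L2 K P W 1 * (frob_norm (K 1 * X + bcast (b 1) N - c 1))\<^sup>2 = (t 1)\<^sup>2"
        using tc[of 1] L1 by (simp add: Rc_def)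
      have s3: "(\<Sum>l\<in>{2..L2-1}. omega_hat L2 W l *
          (frob_norm (W l * map_mat \<sigma> (ch (l - 1)) + bcast (bh l) N - ch l))\<^sup>2)
          = (\<Sum>l\<in>{2..L2-1}. (t (l + L1))\<^sup>2)"
        by (rule sum.cong) (auto simp: tf Rf_def)
      have s4: "omega_hat L2 W 1 * (frob_norm (W 1 * P L1 * map_mat \<sigma> (c L1) + bcast (bh 1) N - ch 1))\<^sup>2
          = (t (L1 + 1))\<^sup>2"
        using tf[of 1] L2 by (simp add: Rf_def add.commute)
      show ?thesis unfolding T_CNN_def Let_def XN(1) s1 s2 s3 s4 L_def sum_split[OF L1 L2]
        unfolding Q_def[symmetric] a0_def by simp
    qed
    have Ceq: "max (sqrt 2) (2 * M) = max (sqrt 2) (max (2 * B) (2 * B ^ (L1 + L2 - 1)))"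
    proof -
      have "2 * max B (B ^ L) = max (2 * B) (2 * B ^ L)" by (cases "B \<le> B ^ L") (simp_all add: max_def)
      thus ?thesis unfolding M_def L_def by simp
    qed
    have LS: "L_S_CNN \<sigma> L1 L2 X A K b c P W bh ch = 1 / sqrt (real N) * sqrt (a0\<^sup>2 + (\<Sum>i\<in>{1..L}. (t i)\<^sup>2))"
      unfolding L_S_CNN_def Teq XN by simp
    have "(1 / sqrt (real N)) * (max (sqrt 2) (2 * M) * sqrt (real L) * sqrt (a0\<^sup>2 + (\<Sum>i\<in>{1..L}. (t i)\<^sup>2)))
      = max (sqrt 2) (2 * M) * sqrt (real L) * (1 / sqrt (real N) * sqrt (a0\<^sup>2 + (\<Sum>i\<in>{1..L}. (t i)\<^sup>2)))"
      by (simp only: mult_ac)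
    with main show ?thesis unfolding \<Phi>_def[symmetric] LS Ceq L_def by simp
  qed
qed


end
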